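(* Let $i\in\mathcal N$, let $\mathbf l_i$ be an $m$-cell configuration of $i$, let $\ell\in\mathcal N_i$ and let $\mathbf l_\ell$ be any $m$-cell configuration of $\ell$ consistent with $\mathbf l_i$. Let $t^*$ be the unique positive solution of $$e^{L_2t^*}-\Big(L_2+\frac{L_2^2}{L_1\sqrt{N_{\max}}}\Big)t^*-1=0,\qquad N_{\max}:=\max\{N_i:i\in\mathcal N\}.$$ Then for every $\kappa\in\bar{\mathcal N}_\ell^{m-1}$ (note $\bar{\mathcal N}_\ell^{m-1}\subset\bar{\mathcal N}_i^m$), $$|\chi_\kappa^{[i]}(t)-\chi_\kappa^{[\ell]}(t)|\le Mt\quad\text{for all }t\in[0,t^*],$$ where $\chi_\kappa^{[i]}$ and $\chi_\kappa^{[\ell]}$ are computed from $\mathbf l_i$ and $\mathbf l_\ell$ respectively.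
   Context: Graph notions: $\mathcal N=\{1,\dots,N\}$ is a finite set of agents, agent $i$ has neighbor set $\mathcal N_i\subset\mathcal N\setminus\{i\}$ of cardinality $N_i$; $\mathcal G=(\mathcal N,\mathcal E)$ with $(\ell,i)\in\mathcal E$ iff $\ell\in\mathcal N_i$; a path of length $m$ is a sequence $i_0\cdots i_m$ with $(i_{k-1},i_k)\in\mathcal E$. For $m\ge1$, $\mathcal N_i^m$ is the set of agents $j\ne i$ having a path of length $m$ to $i$ and no shorter path to $i$; $\mathcal N_i^0=\{i\}$; $\bar{\mathcal N}_i^m=\bigcup_{k=0}^m\mathcal N_i^k$, of cardinality $\bar N_i^m$. Dynamics: each agent has state $x_i\in\mathbb R^n$ and drift $f_i(x_i,\mathbf x_j)$, $\mathbf x_j=(x_{j_1},\dots,x_{j_{N_i}})$ listing the neighbors' states in a fixed order. There are constants $M,L_1,L_2>0$ with $|f_i(x_i,\mathbf x_j)|\le M$, $|f_i(x_i,\mathbf x_j)-f_i(x_i,\mathbf y_j)|\le L_1|\mathbf x_j-\mathbf y_j|$ and $|f_i(x_i,\mathbf x_j)-f_i(y_i,\mathbf x_j)|\le L_2|x_i-y_i|$ for all $x_i,y_i\in\mathbb R^n$, $\mathbf x_j,\mathbf y_j\in\mathbb R^{N_in}$, $i\in\mathcal N$. Cells and reference trajectories: a cell decomposition $\mathcal S=\{S_l\}_{l\in\mathcal I}$ of $\mathbb R^n$ ($\mathcal I$ finite or countable) is a family of uniformly bounded connected sets with pairwise disjoint interiors whose union is $\mathbb R^n$; a reference point $x_{l,G}\in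 S_l$ is fixed for each $l$. Fix the degree of decentralization $m\ge1$. An $m$-cell configuration of agent $i$ is a tuple $\mathbf l_i=(l_\kappa)_{\kappa\in\bar{\mathcal N}_i^m}\in\mathcal I^{\bar N_i^m}$. Given $\mathbf l_i$, define $\chi_\kappa^{[i]}:[0,\infty)\to\mathbb R^n$ for $\kappa\in\bar{\mathcal N}_i^m$ as follows. Case (i), $\mathcal N_i^{m+1}=\emptyset$: $\dot\chi_\kappa^{[i]}(t)=f_\kappa(\chi_\kappa^{[i]}(t),\boldsymbol\chi_{j(\kappa)}^{[i]}(t))$, $\chi_\kappa^{[i]}(0)=x_{l_\kappa,G}$, for all $\kappa\in\bar{\mathcal N}_i^m$, where $\boldsymbol\chi_{j(\kappa)}^{[i]}$ lists $\chi_\nu^{[i]}$, $\nu\in\mathcal N_\kappa$ (these $\nu$ lie in $\bar{\mathcal N}_i^m$). Case (ii), $\mathcal N_i^{m+1}\ne\emptyset$: the same ODE and initial conditions for $\kappa\in\bar{\mathcal N}_i^{m-1}$, while $\chi_\kappa^{[i]}(t):=x_{l_\kappa,G}$ for all $t\ge0$ and $\kappa\in\mathcal N_i^m$. For $\ell\in\mathcal N_i$, an $m$-cell configuration $\mathbf l_\ell=(\bar l_\kappa)_{\kappa\in\bar{\mathcal N}_\ell^m}$ of $\ell$ is consistent with $\mathbf l_i=(l_\kappa)_{\kappa\in\bar{\mathcal N}_i^m}$ if $l_\kappa=\bar l_\kappa$ for all $\kappa\in\bar{\mathcal N}_i^m\cap\bar{\mathcal N}_\ell^m$. *)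

theory Defs
  imports "HOL-Analysis.Analysis"
begin

text \<open>Agents are the natural numbers 1..N; Nb i is the neighbour set of agent i.
  A path of length m from j to i: p 0 = j, p m = i, and (p k, p (k+1)) is an edge,
  i.e. p k is a neighbour of p (k+1).\<close>

definition has_path :: "(nat \<Rightarrow> nat set) \<Rightarrow> nat \<Rightarrow> nat \<Rightarrow> nat \<Rightarrow> bool" where
  "has_path Nb j i m \<longleftrightarrow>
     (\<exists>p::nat \<Rightarrow> nat. p 0 = j \<and> p m = i \<and> (\<forall>k<m. p k \<in> Nb (p (Suc k))))"

definition layer :: "nat \<Rightarrow> (nat \<Rightarrow> nat set) \<Rightarrow> nat \<Rightarrow> nat \<Rightarrow> nat set" where
  "layer N Nb i m =
     (if m = 0 then {i}
      else {j \<in> {1..N}. j \<noteq> i \<and> has_path Nb j i m \<and> (\<forall>k<m. \<not> has_path Nb j i k)})"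

definition ball_layer :: "nat \<Rightarrow> (nat \<Rightarrow> nat set) \<Rightarrow> nat \<Rightarrow> nat \<Rightarrow> nat set" where
  "ball_layer N Nb i m = (\<Union>k\<le>m. layer N Nb i k)"

text \<open>Euclidean norm of the difference of two stacked neighbour-state vectors
  (x_{j_1},...,x_{j_{N_i}}) and (y_{j_1},...,y_{j_{N_i}}).\<close>
definition nbr_dist :: "(nat \<Rightarrow> nat set) \<Rightarrow> nat \<Rightarrow> (nat \<Rightarrow> 'v::euclidean_space) \<Rightarrow> (nat \<Rightarrow> 'v) \<Rightarrow> real" where
  "nbr_dist Nb i x y = sqrt (\<Sum>j\<in>Nb i. (norm (x j - y j))\<^sup>2)"

definition cell_decomposition :: "'c set \<Rightarrow> ('c \<Rightarrow> 'v::euclidean_space set) \<Rightarrow> bool" where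
  "cell_decomposition I S \<longleftrightarrow>
     countable I \<and>
     (\<exists>B. \<forall>l\<in>I. \<forall>x\<in>S l. \<forall>y\<in>S l. dist x y \<le> B) \<and>
     (\<forall>l\<in>I. connected (S l)) \<and>
     (\<forall>l\<in>I. \<forall>l'\<in>I. l \<noteq> l' \<longrightarrow> interior (S l) \<inter> interior (S l') = {}) \<and>
     (\<Union>l\<in>I. S l) = UNIV"

text \<open>chi is a family of reference trajectories chi_kappa^[i] (kappa in Nbar_i^m) of agent i
  computed from the m-cell configuration lc (cases (i) and (ii) of the paper).\<close>
definition ref_traj ::
  "nat \<Rightarrow> (nat \<Rightarrow> nat set) \<Rightarrow> (nat \<Rightarrow> 'v::euclidean_space \<Rightarrow> (nat \<Rightarrow> 'v) \<Rightarrow> 'v) \<Rightarrow>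
   ('c \<Rightarrow> 'v) \<Rightarrow> nat \<Rightarrow> nat \<Rightarrow> (nat \<Rightarrow> 'c) \<Rightarrow> (nat \<Rightarrow> real \<Rightarrow> 'v) \<Rightarrow> bool" where
  "ref_traj N Nb f xG m i lc chi \<longleftrightarrow>
     (let D = (if layer N Nb i (Suc m) = {} then ball_layer N Nb i m
               else ball_layer N Nb i (m - 1))
      in (\<forall>\<kappa>\<in>D. chi \<kappa> 0 = xG (lc \<kappa>) \<and>
            (\<forall>t\<ge>0. ((chi \<kappa>) has_vector_derivative
                       f \<kappa> (chi \<kappa> t) (\<lambda>\<nu>. chi \<nu> t)) (at t within {0..}))) \<and>
         (layer N Nb i (Suc m) \<noteq> {} \<longrightarrow>
            (\<forall>\<kappa>\<in>layer N Nb i m. \<forall>t\<ge>0. chi \<kappa> t = xG (lc \<kappa>))))"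

end

theory Submission
  imports Defs "HOL-Analysis.Analysis"
begin

lemma hp_zero: "has_path Nb x y 0 \<longleftrightarrow> x = y"
  unfolding has_path_def by auto

lemma hp_append: "has_path Nb x y k \<Longrightarrow> y \<in> Nb z \<Longrightarrow> has_path Nb x z (Suc k)"
  unfolding has_path_def
proof (elim exE conjE)
  fix p assume p: "p 0 = x" "p k = y" "\<forall>j<k. p j \<in> Nb (p (Suc j))" and yz: "y \<in> Nb z"
  define q where "q n = (if n \<le> k then p n else z)" for n
  have "q 0 = x" "q (Suc k) = z" using p by (auto simp: q_def)
  moreover have "\<forall>j<Suc k. q j \<in> Nb (q (Suc j))"
    using p yz by (auto simp: q_def less_Suc_eq)
  ultimately show "\<exists>q. q 0 = x \<and> q (Suc k) = z \<and> (\<forall>j<Suc k. q j \<in> Nb (q (Suc j)))" by blast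
qed

lemma hp_prepend: "has_path Nb y z k \<Longrightarrow> x \<in> Nb y \<Longrightarrow> has_path Nb x z (Suc k)"
  unfolding has_path_def
proof (elim exE conjE)
  fix p assume p: "p 0 = y" "p k = z" "\<forall>j<k. p j \<in> Nb (p (Suc j))" and xy: "x \<in> Nb y"
  define q where "q n = (case n of 0 \<Rightarrow> x | Suc n' \<Rightarrow> p n')" for n
  have "q 0 = x" "q (Suc k) = z" using p by (auto simp: q_def)
  moreover have "\<forall>j<Suc k. q j \<in> Nb (q (Suc j))"
  proof (intro allI impI)
    fix j assume "j < Suc k"
    then show "q j \<in> Nb (q (Suc j))"
      using p xy by (cases j) (auto simp: q_def)
  qed
  ultimately show "\<exists>q. q 0 = x \<and> q (Suc k) = z \<and> (\<forall>j<Suc k. q j \<in> Nb (q (Suc j)))" by blast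
qed

lemma ball_char:
  "ball_layer N Nb j n = {x. x = j \<or> (x \<in> {1..N} \<and> (\<exists>k\<le>n. has_path Nb x j k))}"
proof (intro set_eqI iffI)
  fix x assume "x \<in> ball_layer N Nb j n"
  then obtain k where "k \<le> n" "x \<in> layer N Nb j k" unfolding ball_layer_def by auto
  then show "x \<in> {x. x = j \<or> (x \<in> {1..N} \<and> (\<exists>k\<le>n. has_path Nb x j k))}"
    unfolding layer_def by (auto split: if_splits)
next
  fix x assume x: "x \<in> {x. x = j \<or> (x \<in> {1..N} \<and> (\<exists>k\<le>n. has_path Nb x j k))}"
  show "x \<in> ball_layer N Nb j n"
  proof (cases "x = j")
    case True then show ?thesis unfolding ball_layer_def layer_def by auto
  next
    case False
    with x obtain k where k: "k \<le> n" "has_path Nb x j k" "x \<in> {1..N}" by auto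
    define k0 where "k0 = (LEAST k. has_path Nb x j k)"
    have h0: "has_path Nb x j k0" unfolding k0_def by (rule LeastI, rule k(2))
    have le: "k0 \<le> k" unfolding k0_def by (rule Least_le, rule k(2))
    have min: "\<forall>k'<k0. \<not> has_path Nb x j k'" unfolding k0_def using not_less_Least by blast
    have "k0 \<noteq> 0"
    proof
      assume "k0 = 0" with h0 have "x = j" by (simp add: hp_zero)
      with False show False ..
    qed
    then have "x \<in> layer N Nb j k0" unfolding layer_def using h0 min False k by auto
    then show ?thesis unfolding ball_layer_def using le k by auto
  qed
qed

lemma ball_nbr:
  assumes "\<kappa> \<in> ball_layer N Nb j k" "\<nu> \<in> Nb \<kappa>" "\<nu> \<in> {1..N}"
  shows "\<nu> \<in> ball_layer N Nb j (Suc k)"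
proof -
  from assms(1) obtain k' where "k' \<le> k" "has_path Nb \<kappa> j k'"
    unfolding ball_char using hp_zero by blast
  then have "has_path Nb \<nu> j (Suc k')" using hp_prepend assms(2) by blast
  then show ?thesis unfolding ball_char using assms(3) \<open>k' \<le> k\<close> by auto
qed

lemma ball_mono: "a \<le> b \<Longrightarrow> ball_layer N Nb j a \<subseteq> ball_layer N Nb j b"
  unfolding ball_layer_def by (intro UN_mono) auto

lemma ball_Suc: "ball_layer N Nb j (Suc k) = ball_layer N Nb j k \<union> layer N Nb j (Suc k)"
  unfolding ball_layer_def by (auto simp: atMost_Suc)

lemma ball_sub: "j \<in> {1..N} \<Longrightarrow> ball_layer N Nb j k \<subseteq> {1..N}"
  unfolding ball_char by auto


lemma phi_le:
  fixes L1 L2 M s T t :: real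
  assumes L1: "L1 > 0" and L2: "L2 > 0" and M: "M > 0" and s: "s \<ge> 0" and T: "T > 0"
    and eq: "exp (L2 * T) - (L2 + L2\<^sup>2 / (L1 * s)) * T - 1 = 0"
    and t: "0 \<le> t" "t \<le> T"
  shows "L1 * s * M * (exp (L2 * t) - 1 - L2 * t) / L2\<^sup>2 \<le> M * t"
proof -
  define lam where "lam = t / T"
  have lam: "0 \<le> lam" "lam \<le> 1" using t T by (auto simp: lam_def)
  have tt: "t = lam * T" using T by (simp add: lam_def)
  have "exp ((1 - lam) *\<^sub>R 0 + lam *\<^sub>R (L2 * T)) \<le> (1 - lam) * exp 0 + lam * exp (L2 * T)"
    by (rule convex_onD[OF exp_convex]) (use lam in auto)
  then have "exp (L2 * t) \<le> 1 - lam + lam * exp (L2 * T)" by (simp add: tt mult_ac)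
  also have "exp (L2 * T) = (L2 + L2\<^sup>2 / (L1 * s)) * T + 1" using eq by simp
  finally have ineq: "exp (L2 * t) - 1 - L2 * t \<le> L2\<^sup>2 / (L1 * s) * t"
    by (simp add: tt algebra_simps)
  show ?thesis
  proof (cases "s = 0")
    case True then show ?thesis using M t by simp
  next
    case False
    then have sp: "s > 0" using s by simp
    have "L1 * s * M * (exp (L2 * t) - 1 - L2 * t) / L2\<^sup>2
        \<le> L1 * s * M * (L2\<^sup>2 / (L1 * s) * t) / L2\<^sup>2"
      by (intro divide_right_mono mult_left_mono ineq) (use L1 sp M in auto)
    also have "\<dots> = M * t" using L1 sp L2 by (simp add: field_simps)
    finally show ?thesis .
  qed
qed

lemma sys:
  fixes d g :: "nat \<Rightarrow> real \<Rightarrow> 'v::real_normed_vector" and E :: "nat set"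
    and L1 L2 M s T :: real
  assumes finE: "finite E"
    and L1: "L1 > 0" and L2: "L2 > 0" and M: "M > 0" and s: "s \<ge> 0" and T: "T > 0"
    and der: "\<And>\<kappa> t. \<kappa> \<in> E \<Longrightarrow> 0 \<le> t \<Longrightarrow> (d \<kappa> has_vector_derivative g \<kappa> t) (at t within {0..})"
    and d0: "\<And>\<kappa>. \<kappa> \<in> E \<Longrightarrow> d \<kappa> 0 = 0"
    and gb: "\<And>\<kappa> t B. \<kappa> \<in> E \<Longrightarrow> 0 \<le> t \<Longrightarrow> t \<le> T \<Longrightarrow> (\<forall>\<nu>\<in>E. norm (d \<nu> t) \<le> B) \<Longrightarrow> M * t \<le> B
               \<Longrightarrow> norm (g \<kappa> t) \<le> L2 * norm (d \<kappa> t) + L1 * s * B"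
    and phi: "\<And>t. 0 \<le> t \<Longrightarrow> t \<le> T \<Longrightarrow> L1 * s * M * (exp (L2 * t) - 1 - L2 * t) / L2\<^sup>2 \<le> M * t"
  shows "\<And>\<kappa> t. \<kappa> \<in> E \<Longrightarrow> 0 \<le> t \<Longrightarrow> t \<le> T \<Longrightarrow> norm (d \<kappa> t) \<le> M * t"
proof -
  define \<phi> where "\<phi> t = L1 * s * M * (exp (L2 * t) - 1 - L2 * t) / L2\<^sup>2" for t
  define K where "K = L2 + L1 * s"
  have cont: "continuous_on {0..T} (d \<kappa>)" if "\<kappa> \<in> E" for \<kappa>
  proof -
    have "continuous (at t within {0..}) (d \<kappa>)" if "t \<in> {0..T}" for t
      using has_vector_derivative_continuous[OF der] that \<open>\<kappa> \<in> E\<close> by auto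
    then have "continuous_on {0..} (d \<kappa>)" using continuous_on_eq_continuous_within
      by (metis \<open>\<kappa> \<in> E\<close> atLeast_iff der has_vector_derivative_continuous)
    then show ?thesis by (rule continuous_on_subset) auto
  qed
  have key: "\<forall>\<kappa>\<in>E. \<forall>t\<in>{0..T}. norm (d \<kappa> t) < \<phi> t + \<epsilon> * exp (K * t)" if eps: "\<epsilon> > 0" for \<epsilon>
  proof (rule ccontr)
    define \<psi> where "\<psi> t = \<phi> t + \<epsilon> * exp (K * t)" for t
    define \<psi>' where "\<psi>' t = L1 * s * M * (L2 * exp (L2 * t) - L2) / L2\<^sup>2 + \<epsilon> * (K * exp (K * t))" for t
    have \<psi>der: "(\<psi> has_vector_derivative \<psi>' x) (at x)" for x
    proof -
      have "(\<psi> has_real_derivative \<psi>' x) (at x)"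
        unfolding \<psi>_def \<psi>'_def \<phi>_def using L2
        by (auto intro!: derivative_eq_intros simp: field_simps power2_eq_square)
      then show ?thesis by (simp add: has_real_derivative_iff_has_vector_derivative)
    qed
    have \<psi>cont: "continuous_on {0..T} \<psi>" unfolding \<psi>_def \<phi>_def using L2 by (intro continuous_intros) auto
    define A where "A = {t\<in>{0..T}. \<exists>\<kappa>\<in>E. \<psi> t \<le> norm (d \<kappa> t)}"
    assume "\<not> (\<forall>\<kappa>\<in>E. \<forall>t\<in>{0..T}. norm (d \<kappa> t) < \<phi> t + \<epsilon> * exp (K * t))"
    then have Ane: "A \<noteq> {}" unfolding A_def \<psi>_def by force
    have "A = (\<Union>\<kappa>\<in>E. {t\<in>{0..T}. \<psi> t \<le> norm (d \<kappa> t)})" unfolding A_def by auto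
    moreover have "closed {t\<in>{0..T}. \<psi> t \<le> norm (d \<kappa> t)}" if "\<kappa> \<in> E" for \<kappa>
      by (intro continuous_on_closed_Collect_le \<psi>cont continuous_on_norm cont that) auto
    ultimately have Acl: "closed A" using finE by auto
    have Abdd: "bdd_below A" unfolding A_def by (rule bdd_belowI[of _ 0]) auto
    define \<tau> where "\<tau> = Inf A"
    have \<tau>A: "\<tau> \<in> A" unfolding \<tau>_def by (rule closed_contains_Inf[OF Ane Abdd Acl])
    have \<tau>le: "\<tau> \<le> t" if "t \<in> A" for t unfolding \<tau>_def by (rule cInf_lower[OF that Abdd])
    from \<tau>A obtain \<kappa> where \<kappa>: "\<kappa> \<in> E" "\<psi> \<tau> \<le> norm (d \<kappa> \<tau>)" "0 \<le> \<tau>" "\<tau> \<le> T"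
      unfolding A_def by auto
    have \<psi>0: "\<psi> 0 = \<epsilon>" unfolding \<psi>_def \<phi>_def by simp
    have "\<tau> \<noteq> 0" using \<kappa> d0[of \<kappa>] \<psi>0 eps by auto
    then have \<tau>pos: "0 < \<tau>" using \<kappa> by simp
    have "norm (d \<kappa> \<tau> - d \<kappa> 0) \<le> \<psi> \<tau> - \<psi> 0"
    proof (rule differentiable_bound_general[OF \<tau>pos])
      show "continuous_on {0..\<tau>} (d \<kappa>)" by (rule continuous_on_subset[OF cont[OF \<kappa>(1)]]) (use \<kappa> in auto)
      show "continuous_on {0..\<tau>} \<psi>" by (rule continuous_on_subset[OF \<psi>cont]) (use \<kappa> in auto)
      fix x assume x: "0 < x" "x < \<tau>"
      have atx: "at x within {0..} = at x" by (rule at_within_interior) (use x in simp)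
      show "(d \<kappa> has_vector_derivative g \<kappa> x) (at x)" using der[OF \<kappa>(1), of x] x atx by simp
      show "(\<psi> has_vector_derivative \<psi>' x) (at x)" by (rule \<psi>der)
      have xT: "x \<le> T" using x \<kappa> by simp
      have notA: "x \<notin> A" using \<tau>le x by force
      have lt: "\<forall>\<nu>\<in>E. norm (d \<nu> x) < \<psi> x" using notA x xT unfolding A_def by force
      define B where "B = M * x + \<epsilon> * exp (K * x)"
      have psiB: "\<psi> x \<le> B" using phi[of x] x xT unfolding B_def \<psi>_def \<phi>_def by simp
      have MB: "M * x \<le> B" unfolding B_def using eps by simp
      have "norm (g \<kappa> x) \<le> L2 * norm (d \<kappa> x) + L1 * s * B"
        using gb[OF \<kappa>(1), of x B] x xT lt psiB MB by force
      also have "\<dots> \<le> L2 * \<psi> x + L1 * s * B"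
        using lt \<kappa>(1) L2 by (intro add_right_mono mult_left_mono) auto
      also have "\<dots> = \<psi>' x"
        unfolding \<psi>_def \<psi>'_def \<phi>_def B_def K_def using L2
        by (simp add: field_simps power2_eq_square)
      finally show "norm (g \<kappa> x) \<le> \<psi>' x" .
    qed
    then show False using \<kappa> d0[of \<kappa>] \<psi>0 eps by simp
  qed
  fix \<kappa> t assume \<kappa>: "\<kappa> \<in> E" and t: "0 \<le> t" "t \<le> T"
  show "norm (d \<kappa> t) \<le> M * t"
  proof (rule field_le_epsilon)
    fix e :: real assume e: "0 < e"
    have "norm (d \<kappa> t) < \<phi> t + e / exp (K * t) * exp (K * t)"
      using key[of "e / exp (K * t)"] e \<kappa> t by (auto simp del: times_divide_eq_left)
    also have "\<dots> \<le> M * t + e" using phi[OF t] unfolding \<phi>_def by simp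
    finally show "norm (d \<kappa> t) \<le> M * t + e" by simp
  qed
qed


lemma rt:
  fixes f :: "nat \<Rightarrow> 'v::euclidean_space \<Rightarrow> (nat \<Rightarrow> 'v) \<Rightarrow> 'v"
  assumes R: "ref_traj N Nb f xG m j lc chi" and m: "m \<ge> 1" and j: "j \<in> {1..N}"
    and nbrs: "\<forall>q\<in>{1..N}. Nb q \<subseteq> {1..N} - {q}"
    and bound: "\<forall>q\<in>{1..N}. \<forall>x y. norm (f q x y) \<le> M"
    and D_def: "D = (if layer N Nb j (Suc m) = {} then ball_layer N Nb j m else ball_layer N Nb j (m - 1))"
  shows "D \<subseteq> ball_layer N Nb j m"
    and "\<And>\<kappa> t. \<kappa> \<in> ball_layer N Nb j m \<Longrightarrow> \<kappa> \<notin> D \<Longrightarrow> t \<ge> 0 \<Longrightarrow> chi \<kappa> t = xG (lc \<kappa>)"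
    and "\<And>\<kappa> t. \<kappa> \<in> D \<Longrightarrow> t \<ge> 0 \<Longrightarrow>
           (chi \<kappa> has_vector_derivative f \<kappa> (chi \<kappa> t) (\<lambda>\<nu>. chi \<nu> t)) (at t within {0..})"
    and "\<And>\<kappa>. \<kappa> \<in> D \<Longrightarrow> chi \<kappa> 0 = xG (lc \<kappa>)"
    and "\<And>\<kappa> \<nu>. \<kappa> \<in> D \<Longrightarrow> \<nu> \<in> Nb \<kappa> \<Longrightarrow> \<nu> \<in> ball_layer N Nb j m"
    and "\<And>\<kappa> t. \<kappa> \<in> D \<Longrightarrow> t \<ge> 0 \<Longrightarrow> norm (chi \<kappa> t - chi \<kappa> 0) \<le> M * t"
proof -
  have mm: "Suc (m - 1) = m" using m by simp
  have R1: "\<forall>\<kappa>\<in>D. chi \<kappa> 0 = xG (lc \<kappa>) \<and>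
            (\<forall>t\<ge>0. ((chi \<kappa>) has_vector_derivative f \<kappa> (chi \<kappa> t) (\<lambda>\<nu>. chi \<nu> t)) (at t within {0..}))"
    and R2: "layer N Nb j (Suc m) \<noteq> {} \<Longrightarrow> (\<forall>\<kappa>\<in>layer N Nb j m. \<forall>t\<ge>0. chi \<kappa> t = xG (lc \<kappa>))"
    using R unfolding ref_traj_def Let_def D_def by auto
  show Dsub: "D \<subseteq> ball_layer N Nb j m" unfolding D_def using ball_mono[of "m - 1" m] by auto
  show "chi \<kappa> t = xG (lc \<kappa>)" if "\<kappa> \<in> ball_layer N Nb j m" "\<kappa> \<notin> D" "t \<ge> 0" for \<kappa> t
  proof -
    have ne: "layer N Nb j (Suc m) \<noteq> {}" using that unfolding D_def by (auto split: if_splits)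
    then have "\<kappa> \<in> layer N Nb j m" using that ball_Suc[of N Nb j "m - 1"] unfolding D_def mm by auto
    then show ?thesis using R2[OF ne] that by auto
  qed
  show "(chi \<kappa> has_vector_derivative f \<kappa> (chi \<kappa> t) (\<lambda>\<nu>. chi \<nu> t)) (at t within {0..})"
    if "\<kappa> \<in> D" "t \<ge> 0" for \<kappa> t using R1 that by auto
  show "chi \<kappa> 0 = xG (lc \<kappa>)" if "\<kappa> \<in> D" for \<kappa> using R1 that by auto
  show "\<nu> \<in> ball_layer N Nb j m" if "\<kappa> \<in> D" "\<nu> \<in> Nb \<kappa>" for \<kappa> \<nu>
  proof -
    have k: "\<kappa> \<in> {1..N}" using Dsub that ball_sub[OF j] by blast
    then have nu: "\<nu> \<in> {1..N}" using nbrs k that by blast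
    show ?thesis
    proof (cases "layer N Nb j (Suc m) = {}")
      case True
      then have "\<kappa> \<in> ball_layer N Nb j m" using that unfolding D_def by simp
      then have "\<nu> \<in> ball_layer N Nb j (Suc m)" using ball_nbr that nu by blast
      then show ?thesis using True ball_Suc by blast
    next
      case False
      then have "\<kappa> \<in> ball_layer N Nb j (m - 1)" using that unfolding D_def by simp
      then have "\<nu> \<in> ball_layer N Nb j (Suc (m - 1))" using ball_nbr that nu by blast
      then show ?thesis using mm by simp
    qed
  qed
  show "norm (chi \<kappa> t - chi \<kappa> 0) \<le> M * t" if "\<kappa> \<in> D" "t \<ge> 0" for \<kappa> t
  proof (cases "t = 0")
    case True then show ?thesis by simp
  next
    case False
    then have tp: "0 < t" using that by simp
    have k: "\<kappa> \<in> {1..N}" using Dsub that ball_sub[OF j] by blast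
    have der: "\<And>s. s \<ge> 0 \<Longrightarrow> (chi \<kappa> has_vector_derivative f \<kappa> (chi \<kappa> s) (\<lambda>\<nu>. chi \<nu> s)) (at s within {0..})"
      using R1 that by auto
    have "continuous_on {0..} (chi \<kappa>)" using continuous_on_eq_continuous_within
      by (metis atLeast_iff der has_vector_derivative_continuous)
    then have cont: "continuous_on {0..t} (chi \<kappa>)" by (rule continuous_on_subset) auto
    have "norm (chi \<kappa> t - chi \<kappa> 0) \<le> M * t - M * 0"
    proof (rule differentiable_bound_general[OF tp cont])
      show "continuous_on {0..t} (\<lambda>x. M * x)" by (intro continuous_intros)
      fix x :: real assume x: "0 < x" "x < t"
      have atx: "at x within {0..} = at x" by (rule at_within_interior) (use x in simp)
      show "(chi \<kappa> has_vector_derivative f \<kappa> (chi \<kappa> x) (\<lambda>\<nu>. chi \<nu> x)) (at x)"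
        using der[of x] x atx by simp
      show "((\<lambda>x. M * x) has_vector_derivative M) (at x)"
        using has_real_derivative_iff_has_vector_derivative
        by (metis DERIV_cmult_Id)
      show "norm (f \<kappa> (chi \<kappa> x) (\<lambda>\<nu>. chi \<nu> x)) \<le> M" using bound k by blast
    qed
    then show ?thesis by simp
  qed
qed


theorem lemma4:
  fixes N m i l :: nat
    and Nb :: "nat \<Rightarrow> nat set"
    and f :: "nat \<Rightarrow> 'v::euclidean_space \<Rightarrow> (nat \<Rightarrow> 'v) \<Rightarrow> 'v"
    and M L1 L2 tstar :: real
    and I :: "'c set" and S :: "'c \<Rightarrow> 'v set" and xG :: "'c \<Rightarrow> 'v"
    and li ll :: "nat \<Rightarrow> 'c"
    and chii chil :: "nat \<Rightarrow> real \<Rightarrow> 'v"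
  assumes nbrs: "\<And>j. j \<in> {1..N} \<Longrightarrow> Nb j \<subseteq> {1..N} - {j}"
    and M_pos: "M > 0" and L1_pos: "L1 > 0" and L2_pos: "L2 > 0"
    and bound: "\<And>j x y. j \<in> {1..N} \<Longrightarrow> norm (f j x y) \<le> M"
    and lip1: "\<And>j x y z. j \<in> {1..N} \<Longrightarrow>
                 norm (f j x y - f j x z) \<le> L1 * nbr_dist Nb j y z"
    and lip2: "\<And>j x x' y. j \<in> {1..N} \<Longrightarrow>
                 norm (f j x y - f j x' y) \<le> L2 * norm (x - x')"
    and cells: "cell_decomposition I S"
    and refpt: "\<And>c. c \<in> I \<Longrightarrow> xG c \<in> S c"
    and m_ge: "m \<ge> 1"
    and i_in: "i \<in> {1..N}"
    and l_nbr: "l \<in> Nb i"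
    and li_cfg: "\<And>\<kappa>. \<kappa> \<in> ball_layer N Nb i m \<Longrightarrow> li \<kappa> \<in> I"
    and ll_cfg: "\<And>\<kappa>. \<kappa> \<in> ball_layer N Nb l m \<Longrightarrow> ll \<kappa> \<in> I"
    and consistent: "\<And>\<kappa>. \<kappa> \<in> ball_layer N Nb i m \<inter> ball_layer N Nb l m \<Longrightarrow> li \<kappa> = ll \<kappa>"
    and chii_def: "ref_traj N Nb f xG m i li chii"
    and chil_def: "ref_traj N Nb f xG m l ll chil"
    and tstar_pos: "tstar > 0"
    and tstar_eq: "exp (L2 * tstar)
        - (L2 + L2\<^sup>2 / (L1 * sqrt (real (Max ((\<lambda>j. card (Nb j)) ` {1..N}))))) * tstar - 1 = 0"
  shows "ball_layer N Nb l (m - 1) \<subseteq> ball_layer N Nb i m \<and>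
         (\<forall>\<kappa>\<in>ball_layer N Nb l (m - 1). \<forall>t\<in>{0..tstar}.
            norm (chii \<kappa> t - chil \<kappa> t) \<le> M * t)"
proof -
  have l_in: "l \<in> {1..N}" using nbrs[OF i_in] l_nbr by auto
  have part1: "ball_layer N Nb l (m - 1) \<subseteq> ball_layer N Nb i m"
  proof
    fix x assume "x \<in> ball_layer N Nb l (m - 1)"
    then have "x = l \<or> (x \<in> {1..N} \<and> (\<exists>k\<le>m - 1. has_path Nb x l k))" unfolding ball_char by auto
    then have "x \<in> {1..N} \<and> (\<exists>k\<le>m - 1. has_path Nb x l k)"
      using l_in hp_zero[of Nb l l] by auto
    then obtain k where "x \<in> {1..N}" "k \<le> m - 1" "has_path Nb x l k" by auto
    then have "has_path Nb x i (Suc k)" "Suc k \<le> m" using hp_append l_nbr m_ge by auto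
    then show "x \<in> ball_layer N Nb i m" unfolding ball_char using \<open>x \<in> {1..N}\<close> by auto
  qed
  define Di where "Di = (if layer N Nb i (Suc m) = {} then ball_layer N Nb i m else ball_layer N Nb i (m - 1))"
  define Dl where "Dl = (if layer N Nb l (Suc m) = {} then ball_layer N Nb l m else ball_layer N Nb l (m - 1))"
  have nb': "\<forall>q\<in>{1..N}. Nb q \<subseteq> {1..N} - {q}" using nbrs by blast
  have bd': "\<forall>q\<in>{1..N}. \<forall>x y. norm (f q x y) \<le> M" using bound by blast
  note RI = rt[OF chii_def m_ge i_in nb' bd' Di_def]
  note RL = rt[OF chil_def m_ge l_in nb' bd' Dl_def]
  define E where "E = Di \<inter> Dl"
  define Nmax where "Nmax = Max ((\<lambda>j. card (Nb j)) ` {1..N})"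
  define s where "s = sqrt (real Nmax)"
  define d where "d \<kappa> t = chii \<kappa> t - chil \<kappa> t" for \<kappa> t
  define g where "g \<kappa> t = f \<kappa> (chii \<kappa> t) (\<lambda>\<nu>. chii \<nu> t) - f \<kappa> (chil \<kappa> t) (\<lambda>\<nu>. chil \<nu> t)" for \<kappa> t
  have Esub: "E \<subseteq> {1..N}" unfolding E_def using RI(1) ball_sub[OF i_in] by blast
  have finE: "finite E" using Esub finite_subset by blast
  have cons: "li \<nu> = ll \<nu>" if "\<nu> \<in> ball_layer N Nb i m" "\<nu> \<in> ball_layer N Nb l m" for \<nu>
    using consistent that by blast
  have src: "norm (d \<nu> t) \<le> M * t"
    if nu: "\<nu> \<in> ball_layer N Nb i m" "\<nu> \<in> ball_layer N Nb l m" "\<nu> \<notin> E" and t: "t \<ge> 0" for \<nu> t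
  proof (cases "\<nu> \<in> Di")
    case True
    then have "\<nu> \<notin> Dl" using nu unfolding E_def by auto
    then have "chil \<nu> t = chii \<nu> 0" using RL(2)[OF nu(2) _ t] RI(4)[OF True] cons[OF nu(1,2)] by simp
    then show ?thesis using RI(6)[OF True t] unfolding d_def by simp
  next
    case False
    then have ci: "chii \<nu> t = xG (li \<nu>)" using RI(2)[OF nu(1) _ t] by simp
    show ?thesis
    proof (cases "\<nu> \<in> Dl")
      case True
      then have "chii \<nu> t = chil \<nu> 0" using ci RL(4)[OF True] cons[OF nu(1,2)] by simp
      then show ?thesis using RL(6)[OF True t] unfolding d_def by (simp add: norm_minus_commute)
    next
      case False
      then have "chil \<nu> t = xG (ll \<nu>)" using RL(2)[OF nu(2) _ t] by simp
      then show ?thesis using ci cons[OF nu(1,2)] M_pos t unfolding d_def by simp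
    qed
  qed
  have main: "norm (d \<kappa> t) \<le> M * t" if "\<kappa> \<in> E" "0 \<le> t" "t \<le> tstar" for \<kappa> t
  proof (rule sys[OF finE L1_pos L2_pos M_pos _ tstar_pos, of s d g, OF _ _ _ _ _ that])
    show "0 \<le> s" unfolding s_def by simp
    show "(d \<kappa> has_vector_derivative g \<kappa> t) (at t within {0..})" if "\<kappa> \<in> E" "0 \<le> t" for \<kappa> t
      unfolding d_def g_def using that unfolding E_def
      by (intro has_vector_derivative_diff RI(3) RL(3)) auto
    show "d \<kappa> 0 = 0" if "\<kappa> \<in> E" for \<kappa>
      using that RI(4) RL(4) RI(1) RL(1) cons unfolding E_def d_def by (metis IntD1 IntD2 subsetD right_minus_eq)
    show "L1 * s * M * (exp (L2 * t) - 1 - L2 * t) / L2\<^sup>2 \<le> M * t" if "0 \<le> t" "t \<le> tstar" for t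
      by (rule phi_le[OF L1_pos L2_pos M_pos _ tstar_pos _ that]) (use tstar_eq in \<open>auto simp: s_def Nmax_def\<close>)
    show "norm (g \<kappa> t) \<le> L2 * norm (d \<kappa> t) + L1 * s * B"
      if k: "\<kappa> \<in> E" "0 \<le> t" "t \<le> tstar" and hB: "\<forall>\<nu>\<in>E. norm (d \<nu> t) \<le> B" and MB: "M * t \<le> B" for \<kappa> t B
    proof -
      have kN: "\<kappa> \<in> {1..N}" using k Esub by auto
      have B0: "0 \<le> B" using MB M_pos k by (smt (verit) mult_nonneg_nonneg)
      have nbB: "norm (chii \<nu> t - chil \<nu> t) \<le> B" if "\<nu> \<in> Nb \<kappa>" for \<nu>
      proof -
        have a: "\<nu> \<in> ball_layer N Nb i m" using RI(5) k that unfolding E_def by auto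
        have b: "\<nu> \<in> ball_layer N Nb l m" using RL(5) k that unfolding E_def by auto
        show ?thesis
        proof (cases "\<nu> \<in> E")
          case True then show ?thesis using hB unfolding d_def by auto
        next
          case False then show ?thesis using src[OF a b False k(2)] MB unfolding d_def by simp
        qed
      qed
      have finNb: "finite (Nb \<kappa>)" using nbrs[OF kN] finite_subset by blast
      have cardle: "card (Nb \<kappa>) \<le> Nmax" unfolding Nmax_def using kN by (intro Max_ge) auto
      have "nbr_dist Nb \<kappa> (\<lambda>\<nu>. chii \<nu> t) (\<lambda>\<nu>. chil \<nu> t) \<le> sqrt (\<Sum>\<nu>\<in>Nb \<kappa>. B\<^sup>2)"
        unfolding nbr_dist_def
        by (intro real_sqrt_le_mono sum_mono power_mono nbB) auto
      also have "\<dots> = sqrt (real (card (Nb \<kappa>))) * B" using B0 by (simp add: real_sqrt_mult)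
      also have "\<dots> \<le> s * B" unfolding s_def using cardle B0 by (intro mult_right_mono) auto
      finally have nd: "nbr_dist Nb \<kappa> (\<lambda>\<nu>. chii \<nu> t) (\<lambda>\<nu>. chil \<nu> t) \<le> s * B" .
      have "norm (g \<kappa> t) \<le> norm (f \<kappa> (chii \<kappa> t) (\<lambda>\<nu>. chii \<nu> t) - f \<kappa> (chil \<kappa> t) (\<lambda>\<nu>. chii \<nu> t))
            + norm (f \<kappa> (chil \<kappa> t) (\<lambda>\<nu>. chii \<nu> t) - f \<kappa> (chil \<kappa> t) (\<lambda>\<nu>. chil \<nu> t))"
        unfolding g_def by (rule norm_diff_triangle_le) auto
      also have "\<dots> \<le> L2 * norm (d \<kappa> t) + L1 * nbr_dist Nb \<kappa> (\<lambda>\<nu>. chii \<nu> t) (\<lambda>\<nu>. chil \<nu> t)"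
        unfolding d_def by (intro add_mono lip1[OF kN] lip2[OF kN])
      also have "\<dots> \<le> L2 * norm (d \<kappa> t) + L1 * (s * B)"
        using nd L1_pos by (intro add_left_mono mult_left_mono) auto
      finally show ?thesis by (simp add: mult_ac)
    qed
  qed
  show ?thesis
  proof (intro conjI part1 ballI)
    fix \<kappa> t assume k: "\<kappa> \<in> ball_layer N Nb l (m - 1)" and t: "t \<in> {0..tstar}"
    have a: "\<kappa> \<in> ball_layer N Nb i m" using part1 k by auto
    have b: "\<kappa> \<in> ball_layer N Nb l m" using ball_mono[of "m - 1" m N Nb l] k by auto
    show "norm (chii \<kappa> t - chil \<kappa> t) \<le> M * t"
      using main[of \<kappa> t] src[OF a b, of t] t unfolding d_def by (cases "\<kappa> \<in> E") auto
  qed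
qed

end
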